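(* Fix $c \in \mathbb{R}$ and $p \in (0,1)$. For each $x^{\text{obs}} > c$ let $\theta(p) = \theta(p; x^{\text{obs}}, c)$ be the unique $\theta \in \mathbb{R}$ solving $F(x^{\text{obs}}; \theta, c) = p$. Then $\theta(p) \to -\infty$ as $x^{\text{obs}} \downarrow c$.
   Context: Let $\Phi$ denote the standard normal distribution function. For $c \in \mathbb{R}$, $a \ge c$ and $\theta \in \mathbb{R}$ define $$F(a;\theta,c) = \frac{\Phi(a-\theta) - \Phi(c-\theta)}{1-\Phi(c-\theta)},$$ which is the distribution function $\Pr(X \le a \mid X \ge c)$ of $X \sim N(\theta,1)$ conditional on $X \ge c$. It is known that for each fixed $x^{\text{obs}} > c$ the map $\theta \mapsto F(x^{\text{obs}};\theta,c)$ is continuous and strictly decreasing from $\mathbb{R}$ onto $(0,1)$, so $\theta(p)$ is well defined for every $p\in(0,1)$. *)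

theory Defs
  imports "HOL-Probability.Probability"
begin

definition Phi :: "real \<Rightarrow> real" where
  "Phi a = (LBINT x:{..a}. std_normal_density x)"

text \<open>Conditional distribution function of X ~ N(theta,1) given X >= c, evaluated at a.\<close>
definition F :: "real \<Rightarrow> real \<Rightarrow> real \<Rightarrow> real" where
  "F a \<theta> c = (Phi (a - \<theta>) - Phi (c - \<theta>)) / (1 - Phi (c - \<theta>))"

definition theta :: "real \<Rightarrow> real \<Rightarrow> real \<Rightarrow> real" where
  "theta p xobs c = (THE \<theta>. F xobs \<theta> c = p)"

end

theory Submission
  imports Defs "HOL-Real_Asymp.Real_Asymp"
begin


lemma rd: "real_distribution (density lborel std_normal_density)"
  unfolding real_distribution_def real_distribution_axioms_def
  using prob_space_normal_density[of 1 0] by simp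

lemma Phi_cdf: "Phi x = cdf (density lborel std_normal_density) x"
proof -
  have "cdf (density lborel std_normal_density) x = measure (density lborel std_normal_density) {..x}"
    by (simp add: cdf_def)
  also have "\<dots> = integral\<^sup>L (density lborel std_normal_density) (indicator {..x})"
    by simp
  also have "\<dots> = integral\<^sup>L lborel (\<lambda>y. std_normal_density y *\<^sub>R indicator {..x} y)"
    by (rule integral_density) auto
  also have "\<dots> = Phi x"
    unfolding Phi_def set_lebesgue_integral_def by (simp add: mult.commute)
  finally show ?thesis by simp
qed

lemma Phi_le1: "Phi x \<le> 1"
  using real_distribution.cdf_bounded_prob[OF rd] Phi_cdf by simp

lemma Phi_lim: "(Phi \<longlongrightarrow> 1) at_top"
proof -
  have "Phi = cdf (density lborel std_normal_density)" by (rule ext) (rule Phi_cdf)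
  then show ?thesis using real_distribution.cdf_lim_at_top_prob[OF rd] by simp
qed

lemma Phi_int: "Phi x = (LBINT y=-\<infinity>..ereal x. std_normal_density y)"
  unfolding Phi_def by (subst interval_integral_Ioc') (auto simp: atMost_def)

lemma ilint: "interval_lebesgue_integrable lborel a b std_normal_density"
  unfolding interval_lebesgue_integrable_def set_integrable_def
  using integrable_mult_indicator[of "einterval a b" lborel std_normal_density]
    integrable_mult_indicator[of "einterval b a" lborel std_normal_density] by simp

lemma Phi_split: "Phi x = Phi 0 + (LBINT y=ereal 0..x. std_normal_density y)"
  unfolding Phi_int
  using interval_integral_sum[of "-\<infinity>" "ereal 0" "ereal x" std_normal_density, OF ilint]
  by linarith

lemma phi_deriv: "(std_normal_density has_real_derivative (- x * std_normal_density x)) (at x)"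
proof -
  have "((\<lambda>x. - x\<^sup>2 / 2) has_real_derivative (- x)) (at x)"
    by (auto intro!: derivative_eq_intros)
  then have "((\<lambda>x. exp (- x\<^sup>2 / 2)) has_real_derivative exp (- x\<^sup>2 / 2) * (- x)) (at x)"
    by (rule DERIV_fun_exp)
  then have "((\<lambda>x. (1 / sqrt (2 * pi)) * exp (- x\<^sup>2 / 2)) has_real_derivative (1 / sqrt (2 * pi)) * (exp (- x\<^sup>2 / 2) * (- x))) (at x)"
    by (rule DERIV_cmult)
  then show ?thesis unfolding std_normal_density_def by (simp add: mult_ac)
qed

lemma phi_cont: "continuous_on S std_normal_density"
  using phi_deriv by (meson DERIV_isCont continuous_at_imp_continuous_on)

lemma Phi_deriv: "(Phi has_real_derivative std_normal_density x) (at x)"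
proof -
  let ?a = "min 0 x - 1" and ?b = "max 0 x + 1"
  have "((\<lambda>u. LBINT y=ereal 0..u. std_normal_density y) has_vector_derivative std_normal_density x) (at x within {?a..?b})"
    by (rule interval_integral_FTC2) (auto simp: phi_cont)
  then have "((\<lambda>u. LBINT y=ereal 0..u. std_normal_density y) has_vector_derivative std_normal_density x) (at x)"
    by (subst (asm) at_within_Icc_at) auto
  then have "((\<lambda>u. Phi 0 + (LBINT y=ereal 0..u. std_normal_density y)) has_real_derivative std_normal_density x) (at x)"
    by (auto simp: has_real_derivative_iff_has_vector_derivative intro!: derivative_eq_intros)
  moreover have "eventually (\<lambda>u. Phi u = Phi 0 + (LBINT y=ereal 0..u. std_normal_density y)) (nhds x)"
    by (intro always_eventually allI) (rule Phi_split)
  ultimately show ?thesis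
    using DERIV_cong_ev[where f=Phi and x=x and y=x and g="\<lambda>u. Phi 0 + (LBINT y=ereal 0..u. std_normal_density y)" and u="std_normal_density x" and v="std_normal_density x"]
    by blast
qed



definition G :: "real \<Rightarrow> real" where "G t = 1 - Phi t"

lemma phi_pos: "0 < std_normal_density t"
  using normal_density_pos[of 1 0 t] by simp

lemma G_deriv: "(G has_real_derivative - std_normal_density t) (at t)"
  unfolding G_def[abs_def] by (auto intro!: derivative_eq_intros Phi_deriv)

lemma Phi_isCont: "isCont Phi t"
  using Phi_deriv DERIV_isCont by blast

lemma G_pos: "0 < G t"
proof -
  have "Phi t < Phi (t + 1)"
    by (rule DERIV_pos_imp_increasing) (auto intro: Phi_deriv phi_pos)
  then show ?thesis using Phi_le1[of "t+1"] unfolding G_def by simp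
qed

lemma G_lim: "(G \<longlongrightarrow> 0) at_top"
proof -
  have "((\<lambda>t. 1 - Phi t) \<longlongrightarrow> 1 - 1) at_top"
    by (intro tendsto_intros Phi_lim)
  then show ?thesis unfolding G_def[abs_def] by simp
qed

lemma phi_t_lim: "((\<lambda>t. std_normal_density t / t) \<longlongrightarrow> 0) at_top"
  unfolding std_normal_density_def by real_asymp

lemma w_pos:
  assumes "0 < t"
  shows "0 < std_normal_density t / t - G t"
proof -
  have "0 - 0 < std_normal_density t / t - G t"
  proof (rule DERIV_neg_imp_decreasing_at_top[where b=t])
    fix x assume x: "x \<ge> t"
    then have x0: "x \<noteq> 0" using assms by simp
    have "DERIV (\<lambda>x. std_normal_density x / x - G x) x :>
       ((- x * std_normal_density x) * x - std_normal_density x * 1) / (x * x) - (- std_normal_density x)"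
      by (intro DERIV_diff DERIV_divide phi_deriv G_deriv DERIV_ident x0)
    moreover have "((- x * std_normal_density x) * x - std_normal_density x * 1) / (x * x) - (- std_normal_density x)
        = - std_normal_density x / (x * x)"
      using x0 by (simp add: field_simps)
    moreover have "- std_normal_density x / (x * x) < 0"
    proof -
      have "0 < std_normal_density x / (x * x)" using phi_pos[of x] x0 by (intro divide_pos_pos) (use phi_pos[of x] x0 in \<open>auto simp: zero_less_mult_iff linorder_neq_iff\<close>)
      then show ?thesis by simp
    qed
    ultimately show "\<exists>y. DERIV (\<lambda>x. std_normal_density x / x - G x) x :> y \<and> y < 0" by auto
  next
    show "((\<lambda>x. std_normal_density x / x - G x) \<longlongrightarrow> 0 - 0) at_top"
      by (intro tendsto_intros phi_t_lim G_lim)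
  qed
  then show ?thesis by simp
qed

lemma u_pos: "0 < std_normal_density t - t * G t"
proof (cases "t \<le> 0")
  case True
  then have "t * G t \<le> 0" using G_pos[of t] by (simp add: mult_nonpos_nonneg)
  then show ?thesis using phi_pos[of t] by linarith
next
  case False
  then have "0 < t * (std_normal_density t / t - G t)" using w_pos[of t] by simp
  then show ?thesis using False by (simp add: algebra_simps)
qed

lemma R_strict:
  assumes "s < t"
  shows "G t / std_normal_density t < G s / std_normal_density s"
proof (rule DERIV_neg_imp_decreasing[OF assms])
  fix x
  have "DERIV (\<lambda>x. G x / std_normal_density x) x :>
     ((- std_normal_density x) * std_normal_density x - G x * (- x * std_normal_density x)) / (std_normal_density x * std_normal_density x)"
    using phi_pos[of x] by (intro DERIV_divide phi_deriv G_deriv) auto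
  moreover have "((- std_normal_density x) * std_normal_density x - G x * (- x * std_normal_density x)) / (std_normal_density x * std_normal_density x) < 0"
  proof (rule divide_neg_pos)
    have "(- std_normal_density x) * std_normal_density x - G x * (- x * std_normal_density x)
      = - (std_normal_density x * (std_normal_density x - x * G x))" by (simp add: algebra_simps)
    also have "\<dots> < 0" using phi_pos[of x] u_pos[of x] by simp
    finally show "(- std_normal_density x) * std_normal_density x - G x * (- x * std_normal_density x) < 0" .
    show "0 < std_normal_density x * std_normal_density x" using phi_pos[of x] by simp
  qed
  ultimately show "\<exists>y. DERIV (\<lambda>x. G x / std_normal_density x) x :> y \<and> y < 0" by blast
qed

lemma h_strict:
  assumes "0 < d" "s < t"
  shows "G (t + d) / G t < G (s + d) / G s"
proof (rule DERIV_neg_imp_decreasing[OF assms(2)])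
  fix x
  have d1: "DERIV (\<lambda>x. G (x + d)) x :> - std_normal_density (x + d)"
    using G_deriv[of "x + d"] by (simp add: DERIV_shift)
  have "DERIV (\<lambda>x. G (x + d) / G x) x :>
     ((- std_normal_density (x + d)) * G x - G (x + d) * (- std_normal_density x)) / (G x * G x)"
    using G_pos[of x] by (intro DERIV_divide d1 G_deriv) auto
  moreover have "((- std_normal_density (x + d)) * G x - G (x + d) * (- std_normal_density x)) / (G x * G x) < 0"
  proof (rule divide_neg_pos)
    have "G (x + d) / std_normal_density (x + d) < G x / std_normal_density x"
      using R_strict[of x "x + d"] assms by simp
    then have "G (x + d) * std_normal_density x < G x * std_normal_density (x + d)"
      using phi_pos[of x] phi_pos[of "x+d"] by (simp add: divide_simps)
    then show "(- std_normal_density (x + d)) * G x - G (x + d) * (- std_normal_density x) < 0"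
      by (simp add: algebra_simps)
    show "0 < G x * G x" using G_pos[of x] by simp
  qed
  ultimately show "\<exists>y. DERIV (\<lambda>x. G (x + d) / G x) x :> y \<and> y < 0" by blast
qed

lemma h_small:
  assumes "0 < d" "0 < q"
  shows "\<exists>t. G (t + d) / G t < q"
proof
  define t where "t = - ln q / d"
  have "G (t + d) / std_normal_density (t + d) < G t / std_normal_density t"
    using R_strict[of t "t + d"] assms by simp
  then have "G (t + d) * std_normal_density t < G t * std_normal_density (t + d)"
    using phi_pos[of t] phi_pos[of "t+d"] by (simp add: divide_simps)
  then have "G (t + d) / G t < std_normal_density (t + d) / std_normal_density t"
    using phi_pos[of t] G_pos[of t] by (simp add: divide_simps mult.commute)
  also have "std_normal_density (t + d) / std_normal_density t = exp (- (t + d)\<^sup>2 / 2 - (- t\<^sup>2 / 2))"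
    unfolding std_normal_density_def exp_diff by simp
  also have "- (t + d)\<^sup>2 / 2 - (- t\<^sup>2 / 2) = ln q - d\<^sup>2 / 2"
    using assms unfolding t_def by (simp add: power2_eq_square field_simps)
  also have "exp (ln q - d\<^sup>2 / 2) < exp (ln q)"
    by (rule exp_less_mono) (use assms in simp)
  also have "exp (ln q) = q" using assms by simp
  finally show "G (t + d) / G t < q" .
qed

lemma F_eq: "F a \<theta> c = 1 - G (a - \<theta>) / G (c - \<theta>)"
  using G_pos[of "c - \<theta>"] unfolding F_def G_def by (simp add: field_simps)



lemma F_isCont_theta: "isCont (\<lambda>\<theta>. F a \<theta> c) \<theta>"
proof -
  have "isCont (\<lambda>\<theta>. Phi (a - \<theta>)) \<theta>" by (intro isCont_o2[OF _ Phi_isCont] continuous_intros)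
  moreover have "isCont (\<lambda>\<theta>. Phi (c - \<theta>)) \<theta>" by (intro isCont_o2[OF _ Phi_isCont] continuous_intros)
  moreover have "1 - Phi (c - \<theta>) \<noteq> 0" using G_pos[of "c - \<theta>"] unfolding G_def by simp
  ultimately show ?thesis unfolding F_def by (intro continuous_intros) auto
qed

lemma F_isCont_a: "isCont (\<lambda>a. F a M c) c"
proof -
  have "isCont (\<lambda>a. Phi (a - M)) c" by (intro isCont_o2[OF _ Phi_isCont] continuous_intros)
  moreover have "1 - Phi (c - M) \<noteq> 0" using G_pos[of "c - M"] unfolding G_def by simp
  ultimately show ?thesis unfolding F_def by (intro continuous_intros) auto
qed

lemma F_strict:
  assumes "c < a" "\<theta>1 < \<theta>2"
  shows "F a \<theta>2 c < F a \<theta>1 c"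
proof -
  have "G ((c - \<theta>1) + (a - c)) / G (c - \<theta>1) < G ((c - \<theta>2) + (a - c)) / G (c - \<theta>2)"
    using assms by (intro h_strict) auto
  then show ?thesis unfolding F_eq by simp
qed

lemma key:
  assumes "0 < p" "p < 1" "c < a" "F a M c < p"
  shows "theta p a c \<le> M"
proof -
  obtain t0 where t0: "G (t0 + (a - c)) / G t0 < 1 - p"
    using h_small[of "a - c" "1 - p"] assms by auto
  define \<theta>1 where "\<theta>1 = c - t0"
  have g1: "p < F a \<theta>1 c"
  proof -
    have "a - (c - t0) = t0 + (a - c)" "c - (c - t0) = t0" by simp_all
    then show ?thesis unfolding F_eq \<theta>1_def using t0 by (simp only:)
  qed
  have lt: "\<theta>1 < M"
  proof (rule ccontr)
    assume "\<not> \<theta>1 < M"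
    then have "F a \<theta>1 c \<le> F a M c"
      using F_strict[OF assms(3), of M \<theta>1] by (cases "M = \<theta>1") auto
    then show False using g1 assms(4) by simp
  qed
  have "\<exists>x. \<theta>1 \<le> x \<and> x \<le> M \<and> F a x c = p"
    by (rule IVT2') (use g1 assms(4) lt in \<open>auto intro!: continuous_at_imp_continuous_on F_isCont_theta\<close>)
  then obtain x where x: "x \<le> M" "F a x c = p" by auto
  have "theta p a c = x"
    unfolding theta_def
  proof (rule the_equality)
    show "F a x c = p" by (rule x(2))
    fix y assume y: "F a y c = p"
    show "y = x"
    proof (rule ccontr)
      assume "y \<noteq> x"
      then consider "y < x" | "x < y" by linarith
      then show False
        using F_strict[OF assms(3), of y x] F_strict[OF assms(3), of x y] x(2) y by cases auto
    qed
  qed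
  then show ?thesis using x(1) by simp
qed

theorem theorem1:
  fixes c p :: real
  assumes "0 < p" and "p < 1"
  shows "filterlim (\<lambda>xobs. theta p xobs c) at_bot (at_right c)"
  unfolding filterlim_at_bot
proof
  fix M
  have "((\<lambda>a. F a M c) \<longlongrightarrow> F c M c) (at c)"
    using F_isCont_a[where M=M and c=c] by (simp add: isCont_def)
  then have "((\<lambda>a. F a M c) \<longlongrightarrow> F c M c) (at_right c)"
    by (rule tendsto_mono[rotated]) (simp add: at_le)
  moreover have "F c M c = 0" unfolding F_def by simp
  ultimately have "eventually (\<lambda>a. F a M c < p) (at_right c)"
    using order_tendstoD(2)[of _ 0 _ p] assms by auto
  then show "eventually (\<lambda>a. theta p a c \<le> M) (at_right c)"
    using eventually_at_right_less[of c]
    by eventually_elim (use key assms in blast)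
qed

end
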